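(* Let $U=\{1,\dots,N\}$ be a finite population with a randomized design and exposure mapping as described in the context, and fix two exposures $d_k,d_l\in\Delta$. Define $$\widehat{\mathrm{Cov}}_A[\widehat{y^T_{HT}}(d_k),\widehat{y^T_{HT}}(d_l)] = \sum_{i\in U}\ \sum_{j\in U\setminus\{i\}:\ \pi_{ij}(d_k,d_l)>0} \frac{\mathbf{I}(D_i=d_k)\mathbf{I}(D_j=d_l)}{\pi_{ij}(d_k,d_l)}\,\frac{y_i(d_k)}{\pi_i(d_k)}\,\frac{y_j(d_l)}{\pi_j(d_l)}\,\big[\pi_{ij}(d_k,d_l)-\pi_i(d_k)\pi_j(d_l)\big]$$ $$\qquad - \sum_{i\in U}\ \sum_{j\in U:\ \pi_{ij}(d_k,d_l)=0}\left[\frac{\mathbf{I}(D_i=d_k)\,y_i(d_k)^2}{2\pi_i(d_k)}+\frac{\mathbf{I}(D_j=d_l)\,y_j(d_l)^2}{2\pi_j(d_l)}\right],$$ where $\pi_{ii}(d_k,d_l)=0$ for $k\neq l$ (so $j=i$ is included in the second sum). Then, for $k\neq l$, $$\mathrm{E}\big[\widehat{\mathrm{Cov}}_A[\widehat{y^T_{HT}}(d_k),\widehat{y^T_{HT}}(d_l)]\big]\le \mathrm{Cov}\big[\widehat{y^T_{HT}}(d_k),\widehat{y^T_{HT}}(d_l)\big],$$ where $\widehat{y^T_{HT}}(d)=\sum_{i=1}^N \mathbf{I}(D_i=d)\,y_i(d)/\pi_i(d)$ and expectations/covariances are over the randomization distribution of $\mathbf{Z}$.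
   Context: A finite population $U$ of units $i=1,\dots,N$. A random treatment assignment vector $\mathbf{Z}=(Z_1,\dots,Z_N)'$ takes values in $\Omega=\{\mathbf{z}\in\{1,\dots,M\}^N: p_{\mathbf{z}}>0\}$ with known probabilities $\Pr(\mathbf{Z}=\mathbf{z})=p_{\mathbf{z}}$. An exposure mapping $f:\Omega\times\Theta\to\Delta$, with $\Delta=\{d_1,\dots,d_K\}$ finite and unit traits $\theta_i\in\Theta$, gives unit $i$'s exposure $D_i=f(\mathbf{Z},\theta_i)$. Write $\pi_i(d)=\Pr(D_i=d)$, $\pi_{ij}(d,d')=\Pr(D_i=d,D_j=d')$ and $\pi_{ij}(d)=\pi_{ij}(d,d)$; it is assumed $0<\pi_i(d_k)<1$ for all $i,k$. Each unit has fixed (non-random) potential outcomes $y_i(d_1),\dots,y_i(d_K)$, and the observed outcome of unit $i$ is $y_i(D_i)$, so only quantities multiplied by $\mathbf{I}(D_i=d)$ for the realized $d$ are observed. *)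

theory Defs
  imports "HOL-Probability.Probability"
begin

definition assignments :: "nat \<Rightarrow> nat \<Rightarrow> (nat \<Rightarrow> nat) set" where
  "assignments N M = {z. (\<forall>i\<in>{1..N}. z i \<in> {1..M}) \<and> (\<forall>i. i \<notin> {1..N} \<longrightarrow> z i = 0)}"

definition expo :: "((nat \<Rightarrow> nat) \<Rightarrow> 'th \<Rightarrow> 'd) \<Rightarrow> (nat \<Rightarrow> 'th) \<Rightarrow> (nat \<Rightarrow> nat) \<Rightarrow> nat \<Rightarrow> 'd" where
  "expo f \<theta> z i = f z (\<theta> i)"

definition pi1 :: "(nat \<Rightarrow> nat) pmf \<Rightarrow> ((nat \<Rightarrow> nat) \<Rightarrow> 'th \<Rightarrow> 'd) \<Rightarrow> (nat \<Rightarrow> 'th) \<Rightarrow> nat \<Rightarrow> 'd \<Rightarrow> real" where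
  "pi1 Z f \<theta> i d = measure_pmf.prob Z {z. expo f \<theta> z i = d}"

definition pi2 :: "(nat \<Rightarrow> nat) pmf \<Rightarrow> ((nat \<Rightarrow> nat) \<Rightarrow> 'th \<Rightarrow> 'd) \<Rightarrow> (nat \<Rightarrow> 'th) \<Rightarrow> nat \<Rightarrow> nat \<Rightarrow> 'd \<Rightarrow> 'd \<Rightarrow> real" where
  "pi2 Z f \<theta> i j d d' = measure_pmf.prob Z {z. expo f \<theta> z i = d \<and> expo f \<theta> z j = d'}"

definition yHT :: "(nat \<Rightarrow> nat) pmf \<Rightarrow> ((nat \<Rightarrow> nat) \<Rightarrow> 'th \<Rightarrow> 'd) \<Rightarrow> (nat \<Rightarrow> 'th) \<Rightarrow> nat \<Rightarrow> (nat \<Rightarrow> 'd \<Rightarrow> real) \<Rightarrow> 'd \<Rightarrow> (nat \<Rightarrow> nat) \<Rightarrow> real" where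
  "yHT Z f \<theta> N y d z = (\<Sum>i\<in>{1..N}. of_bool (expo f \<theta> z i = d) * y i d / pi1 Z f \<theta> i d)"

definition covA :: "(nat \<Rightarrow> nat) pmf \<Rightarrow> ((nat \<Rightarrow> nat) \<Rightarrow> 'th \<Rightarrow> 'd) \<Rightarrow> (nat \<Rightarrow> 'th) \<Rightarrow> nat \<Rightarrow> (nat \<Rightarrow> 'd \<Rightarrow> real) \<Rightarrow> 'd \<Rightarrow> 'd \<Rightarrow> (nat \<Rightarrow> nat) \<Rightarrow> real" where
  "covA Z f \<theta> N y dk dl z =
     (\<Sum>i\<in>{1..N}. \<Sum>j\<in>{j\<in>{1..N} - {i}. pi2 Z f \<theta> i j dk dl > 0}.
        of_bool (expo f \<theta> z i = dk) * of_bool (expo f \<theta> z j = dl) / pi2 Z f \<theta> i j dk dl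
        * (y i dk / pi1 Z f \<theta> i dk) * (y j dl / pi1 Z f \<theta> j dl)
        * (pi2 Z f \<theta> i j dk dl - pi1 Z f \<theta> i dk * pi1 Z f \<theta> j dl))
   - (\<Sum>i\<in>{1..N}. \<Sum>j\<in>{j\<in>{1..N}. pi2 Z f \<theta> i j dk dl = 0}.
        of_bool (expo f \<theta> z i = dk) * (y i dk)\<^sup>2 / (2 * pi1 Z f \<theta> i dk)
        + of_bool (expo f \<theta> z j = dl) * (y j dl)\<^sup>2 / (2 * pi1 Z f \<theta> j dl))"

definition pmf_cov :: "'a pmf \<Rightarrow> ('a \<Rightarrow> real) \<Rightarrow> ('a \<Rightarrow> real) \<Rightarrow> real" where
  "pmf_cov P X Y = measure_pmf.expectation P (\<lambda>x. (X x - measure_pmf.expectation P X) * (Y x - measure_pmf.expectation P Y))"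

end

theory Submission imports Defs begin
lemma E_ind: "measure_pmf.expectation Z (\<lambda>z. of_bool (P z)) = measure_pmf.prob Z {z. P z}"
proof -
  have "(\<lambda>z. of_bool (P z)::real) = indicator {z. P z}" by (auto simp: indicator_def)
  thus ?thesis by (simp add: measure_pmf.emeasure_finite)
qed
lemma E_ind2: "measure_pmf.expectation Z (\<lambda>z. of_bool (P z) * of_bool (Q z)) = measure_pmf.prob Z {z. P z \<and> Q z}"
proof -
  have "(\<lambda>z. of_bool (P z) * of_bool (Q z)::real) = (\<lambda>z. of_bool (P z \<and> Q z))" by auto
  thus ?thesis by (simp add: E_ind)
qed
lemma fin_assign: "finite (assignments N M)"
proof -
  have "assignments N M \<subseteq> (\<lambda>g i. if i\<in>{1..N} then g i else 0) ` PiE {1..N} (\<lambda>_. {1..M})"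
  proof
    fix z assume z: "z \<in> assignments N M"
    show "z \<in> (\<lambda>g i. if i\<in>{1..N} then g i else 0) ` PiE {1..N} (\<lambda>_. {1..M})"
      apply (rule image_eqI[where x="restrict z {1..N}"])
      using z unfolding assignments_def by auto
  qed
  moreover have "finite (PiE {1..N} (\<lambda>_. {1..M::nat}))" by (rule finite_PiE) auto
  ultimately show ?thesis by (meson finite_imageI finite_subset)
qed

theorem mainTheorem1:
  fixes N M :: nat
    and Z :: "(nat \<Rightarrow> nat) pmf"
    and f :: "(nat \<Rightarrow> nat) \<Rightarrow> 'th \<Rightarrow> 'd"
    and \<theta> :: "nat \<Rightarrow> 'th"
    and \<Delta> :: "'d set"
    and y :: "nat \<Rightarrow> 'd \<Rightarrow> real"
    and dk dl :: 'd
  assumes "set_pmf Z \<subseteq> assignments N M"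
    and "finite \<Delta>"
    and "\<And>z i. z \<in> set_pmf Z \<Longrightarrow> f z (\<theta> i) \<in> \<Delta>"
    and "\<And>i d. i \<in> {1..N} \<Longrightarrow> d \<in> \<Delta> \<Longrightarrow> 0 < pi1 Z f \<theta> i d \<and> pi1 Z f \<theta> i d < 1"
    and "dk \<in> \<Delta>" and "dl \<in> \<Delta>" and "dk \<noteq> dl"
  shows "measure_pmf.expectation Z (covA Z f \<theta> N y dk dl)
           \<le> pmf_cov Z (yHT Z f \<theta> N y dk) (yHT Z f \<theta> N y dl)"
proof -
  have fin: "finite (set_pmf Z)" using assms(1) fin_assign finite_subset by blast
  have int: "\<And>g::_\<Rightarrow>real. integrable Z g" by (rule integrable_measure_pmf_finite[OF fin])
  define p where "p i = pi1 Z f \<theta> i dk" for i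
  define q where "q i = pi1 Z f \<theta> i dl" for i
  define r where "r i j = pi2 Z f \<theta> i j dk dl" for i j
  define Ik where "Ik i z = (of_bool (expo f \<theta> z i = dk) :: real)" for i z
  define Il where "Il i z = (of_bool (expo f \<theta> z i = dl) :: real)" for i z
  define u where "u i = y i dk" for i
  define v where "v i = y i dl" for i
  have pp: "i \<in> {1..N} \<Longrightarrow> p i > 0" for i using assms(4)[OF _ assms(5)] p_def by auto
  have qp: "i \<in> {1..N} \<Longrightarrow> q i > 0" for i using assms(4)[OF _ assms(6)] q_def by auto
  have EIk: "measure_pmf.expectation Z (Ik i) = p i" for i
    unfolding Ik_def p_def pi1_def by (rule E_ind)
  have EIl: "measure_pmf.expectation Z (Il i) = q i" for i
    unfolding Il_def q_def pi1_def by (rule E_ind)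
  have EIkl: "measure_pmf.expectation Z (\<lambda>z. Ik i z * Il j z) = r i j" for i j
    unfolding Ik_def Il_def r_def pi2_def by (rule E_ind2)
  have r0: "r i i = 0" for i
    unfolding r_def pi2_def using assms(7) by (simp add: measure_pmf.prob_eq_0 )
  have rge: "r i j \<ge> 0" for i j unfolding r_def pi2_def by simp
  have X: "yHT Z f \<theta> N y dk = (\<lambda>z. \<Sum>i\<in>{1..N}. Ik i z * (u i / p i))"
    unfolding yHT_def Ik_def u_def p_def by (auto intro!: sum.cong)
  have Y: "yHT Z f \<theta> N y dl = (\<lambda>z. \<Sum>i\<in>{1..N}. Il i z * (v i / q i))"
    unfolding yHT_def Il_def v_def q_def by (auto intro!: sum.cong)
  have EX: "measure_pmf.expectation Z (yHT Z f \<theta> N y dk) = (\<Sum>i\<in>{1..N}. u i)"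
    unfolding X using pp by (simp add: int EIk, intro sum.cong) force+
  have EY: "measure_pmf.expectation Z (yHT Z f \<theta> N y dl) = (\<Sum>i\<in>{1..N}. v i)"
    unfolding Y using qp by (simp add: int EIl, intro sum.cong) force+
  have EXY: "measure_pmf.expectation Z (\<lambda>z. yHT Z f \<theta> N y dk z * yHT Z f \<theta> N y dl z)
     = (\<Sum>i\<in>{1..N}. \<Sum>j\<in>{1..N}. r i j * (u i / p i) * (v j / q j))"
  proof -
    have e1: "(\<lambda>z. yHT Z f \<theta> N y dk z * yHT Z f \<theta> N y dl z) =
       (\<lambda>z. \<Sum>i\<in>{1..N}. \<Sum>j\<in>{1..N}. (Ik i z * Il j z) * ((u i / p i) * (v j / q j)))"
      unfolding X Y by (auto simp: sum_product intro!: sum.cong)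
    have e2: "measure_pmf.expectation Z (\<lambda>z. \<Sum>i\<in>{1..N}. \<Sum>j\<in>{1..N}. (Ik i z * Il j z) * c i j)
       = (\<Sum>i\<in>{1..N}. \<Sum>j\<in>{1..N}. measure_pmf.expectation Z (\<lambda>z. Ik i z * Il j z) * c i j)" for c
      by (simp add: int integral_sum)
    show ?thesis unfolding e1 e2[of "\<lambda>i j. (u i / p i) * (v j / q j)"] EIkl
      by (simp only: mult.assoc)
  qed
  let ?X = "yHT Z f \<theta> N y dk" and ?Y = "yHT Z f \<theta> N y dl"
  have cov: "pmf_cov Z ?X ?Y = (\<Sum>i\<in>{1..N}. \<Sum>j\<in>{1..N}. r i j * (u i / p i) * (v j / q j) - u i * v j)"
  proof -
    define c where "c = measure_pmf.expectation Z ?X"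
    define e where "e = measure_pmf.expectation Z ?Y"
    have "(\<lambda>x. (?X x - c) * (?Y x - e)) = (\<lambda>x. ?X x * ?Y x - c * ?Y x - e * ?X x + c * e)"
      by (auto simp: algebra_simps)
    hence "pmf_cov Z ?X ?Y = measure_pmf.expectation Z (\<lambda>x. ?X x * ?Y x) - c * e"
      unfolding pmf_cov_def c_def[symmetric] e_def[symmetric] by (simp add: int c_def e_def)
    also have "\<dots> = (\<Sum>i\<in>{1..N}. \<Sum>j\<in>{1..N}. r i j * (u i / p i) * (v j / q j)) - (\<Sum>i\<in>{1..N}. \<Sum>j\<in>{1..N}. u i * v j)"
      unfolding EXY c_def e_def EX EY by (simp add: sum_product)
    finally show ?thesis by (simp add: sum_subtractf)
  qed
  define A where "A i = {j\<in>{1..N} - {i}. r i j > 0}" for i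
  define B where "B i = {j\<in>{1..N}. r i j = 0}" for i
  have covA: "covA Z f \<theta> N y dk dl = (\<lambda>z.
     (\<Sum>i\<in>{1..N}. \<Sum>j\<in>A i. (Ik i z * Il j z) * (1 / r i j * (u i / p i) * (v j / q j) * (r i j - p i * q j)))
   - (\<Sum>i\<in>{1..N}. \<Sum>j\<in>B i. Ik i z * ((u i)\<^sup>2 / (2 * p i)) + Il j z * ((v j)\<^sup>2 / (2 * q j))))"
    unfolding covA_def A_def B_def r_def[symmetric] p_def[symmetric] q_def[symmetric]
      Ik_def[symmetric] Il_def[symmetric] u_def[symmetric] v_def[symmetric]
    by (auto intro!: sum.cong simp: mult.assoc)
  have fA: "finite (A i)" for i unfolding A_def by auto
  have fB: "finite (B i)" for i unfolding B_def by auto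
  have ECA: "measure_pmf.expectation Z (covA Z f \<theta> N y dk dl) =
     (\<Sum>i\<in>{1..N}. \<Sum>j\<in>A i. r i j * (1 / r i j * (u i / p i) * (v j / q j) * (r i j - p i * q j)))
   - (\<Sum>i\<in>{1..N}. \<Sum>j\<in>B i. p i * ((u i)\<^sup>2 / (2 * p i)) + q j * ((v j)\<^sup>2 / (2 * q j)))"
    unfolding covA by (simp add: int EIk EIkl EIl)
  have AB: "A i \<union> B i = {1..N}" "A i \<inter> B i = {}" for i
    unfolding A_def B_def using r0 rge by (auto simp: less_le)
  show ?thesis
    unfolding ECA cov
  proof -
    let ?g = "\<lambda>i j. r i j * (u i / p i) * (v j / q j) - u i * v j"
    have "(\<Sum>i\<in>{1..N}. \<Sum>j\<in>A i. r i j * (1 / r i j * (u i / p i) * (v j / q j) * (r i j - p i * q j)))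
   - (\<Sum>i\<in>{1..N}. \<Sum>j\<in>B i. p i * ((u i)\<^sup>2 / (2 * p i)) + q j * ((v j)\<^sup>2 / (2 * q j)))
      = (\<Sum>i\<in>{1..N}. (\<Sum>j\<in>A i. ?g i j) - (\<Sum>j\<in>B i. (u i)\<^sup>2 / 2 + (v j)\<^sup>2 / 2))"
      unfolding sum_subtractf[symmetric]
    proof (rule sum.cong[OF refl])
      fix i assume i: "i \<in> {1..N}"
      have "(\<Sum>j\<in>A i. r i j * (1 / r i j * (u i / p i) * (v j / q j) * (r i j - p i * q j))) = (\<Sum>j\<in>A i. ?g i j)"
      proof (rule sum.cong[OF refl])
        fix j assume j: "j \<in> A i"
        hence rp: "r i j > 0" and jN: "j \<in> {1..N}" unfolding A_def by auto
        with pp[OF i] qp[OF jN] show "r i j * (1 / r i j * (u i / p i) * (v j / q j) * (r i j - p i * q j)) = ?g i j"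
          by (simp add: field_simps)
      qed
      moreover have "(\<Sum>j\<in>B i. p i * ((u i)\<^sup>2 / (2 * p i)) + q j * ((v j)\<^sup>2 / (2 * q j))) = (\<Sum>j\<in>B i. (u i)\<^sup>2 / 2 + (v j)\<^sup>2 / 2)"
      proof (rule sum.cong[OF refl])
        fix j assume "j \<in> B i"
        hence jN: "j \<in> {1..N}" unfolding B_def by auto
        show "p i * ((u i)\<^sup>2 / (2 * p i)) + q j * ((v j)\<^sup>2 / (2 * q j)) = (u i)\<^sup>2 / 2 + (v j)\<^sup>2 / 2"
          using pp[OF i] qp[OF jN] by simp
      qed
      ultimately show "(\<Sum>j\<in>A i. r i j * (1 / r i j * (u i / p i) * (v j / q j) * (r i j - p i * q j))) -
         (\<Sum>j\<in>B i. p i * ((u i)\<^sup>2 / (2 * p i)) + q j * ((v j)\<^sup>2 / (2 * q j))) =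
         (\<Sum>j\<in>A i. ?g i j) - (\<Sum>j\<in>B i. (u i)\<^sup>2 / 2 + (v j)\<^sup>2 / 2)" by simp
    qed
    also have "\<dots> \<le> (\<Sum>i\<in>{1..N}. \<Sum>j\<in>{1..N}. ?g i j)"
    proof (rule sum_mono)
      fix i assume i: "i \<in> {1..N}"
      have "(\<Sum>j\<in>{1..N}. ?g i j) = (\<Sum>j\<in>A i. ?g i j) + (\<Sum>j\<in>B i. ?g i j)"
        using sum.union_disjoint[OF fA fB AB(2), of "?g i"] AB(1) by simp
      moreover have "- (\<Sum>j\<in>B i. (u i)\<^sup>2 / 2 + (v j)\<^sup>2 / 2) \<le> (\<Sum>j\<in>B i. ?g i j)"
        unfolding sum_negf[symmetric]
      proof (rule sum_mono)
        fix j assume "j \<in> B i"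
        hence "r i j = 0" unfolding B_def by auto
        moreover have "0 \<le> (u i - v j)\<^sup>2" by simp
        ultimately show "- ((u i)\<^sup>2 / 2 + (v j)\<^sup>2 / 2) \<le> ?g i j"
          by (simp add: power2_eq_square algebra_simps)
      qed
      ultimately show "(\<Sum>j\<in>A i. ?g i j) - (\<Sum>j\<in>B i. (u i)\<^sup>2 / 2 + (v j)\<^sup>2 / 2) \<le> (\<Sum>j\<in>{1..N}. ?g i j)"
        by simp
    qed
    finally show "(\<Sum>i\<in>{1..N}. \<Sum>j\<in>A i. r i j * (1 / r i j * (u i / p i) * (v j / q j) * (r i j - p i * q j)))
   - (\<Sum>i\<in>{1..N}. \<Sum>j\<in>B i. p i * ((u i)\<^sup>2 / (2 * p i)) + q j * ((v j)\<^sup>2 / (2 * q j)))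
      \<le> (\<Sum>i\<in>{1..N}. \<Sum>j\<in>{1..N}. ?g i j)" .
  qed
qed
end
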